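(* For any $n\ge1$, the $\mathbb{S}_n$-module $\mathcal{C}om\mathcal{T}rias(n)$ is isomorphic to the free $k$-module on $\mathcal{C}om\mathcal{T}rias_n=\{e^n_J\mid J\subset[n],\ J\ne\emptyset\}$, where the action of $\mathbb{S}_n$ is induced by the natural action on the subsets $J$ of $[n]$, and the composition of the operad $\mathcal{C}om\mathcal{T}rias$ is given by $$e^k_J\otimes e^{i_1}_{J_1}\otimes\cdots\otimes e^{i_k}_{J_k}\mapsto e^n_{\bar J},\qquad n=i_1+\cdots+i_k,\quad \bar J=\bigcup_{j\in J}\big((i_1+\cdots+i_{j-1})+J_j\big),$$ where $(i_1+\cdots+i_{j-1})+J_j=\{i_1+\cdots+i_{j-1}+a\mid a\in J_j\}$.
   Context: $k$ denotes $\mathbb{Z}$, $\mathbb{Q}$, $\mathbb{F}_p$ or a field of characteristic $0$. A commutative trialgebra is a $k$-module $A$ with two binary operations $*$ and $\bullet$ such that $(x*y)*z=x*(y*z)=x*(z*y)$; $x\bullet y=y\bullet x$ and $(x\bullet y)\bullet z=x\bullet(y\bullet z)$; and $x*(y\bullet z)=x*(y*z)$, $(x\bullet y)*z=x\bullet(y*z)$. $\mathcal{C}om\mathcal{T}rias$ is the (quadratic) operad encoding commutative trialgebras, and $\mathcal{C}om\mathcal{T}rias(n)$ its arity-$n$ component. *)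

theory Defs
  imports "HOL-Combinatorics.Permutations"
begin

text \<open>Operadic terms in the two generating operations (* and the commutative bullet),
  with leaves labelled by variables (natural numbers).\<close>
datatype tm = V nat | Star tm tm | Bul tm tm

fun leaves :: "tm \<Rightarrow> nat list" where
  "leaves (V i) = [i]"
| "leaves (Star s t) = leaves s @ leaves t"
| "leaves (Bul s t) = leaves s @ leaves t"

text \<open>multilinear term in the variables 1..n: a basis element of the free operad in arity n\<close>
definition multilin :: "nat \<Rightarrow> tm \<Rightarrow> bool" where
  "multilin n t \<longleftrightarrow> distinct (leaves t) \<and> set (leaves t) = {1..n}"

fun relabel :: "(nat \<Rightarrow> nat) \<Rightarrow> tm \<Rightarrow> tm" where
  "relabel f (V i) = V (f i)"
| "relabel f (Star s t) = Star (relabel f s) (relabel f t)"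
| "relabel f (Bul s t) = Bul (relabel f s) (relabel f t)"

text \<open>substitution of terms for variables (operadic composition on representatives)\<close>
fun subst :: "(nat \<Rightarrow> tm) \<Rightarrow> tm \<Rightarrow> tm" where
  "subst f (V i) = f i"
| "subst f (Star s t) = Star (subst f s) (subst f t)"
| "subst f (Bul s t) = Bul (subst f s) (subst f t)"

inductive ax :: "tm \<Rightarrow> tm \<Rightarrow> bool" where
  "ax (Star (Star x y) z) (Star x (Star y z))"
| "ax (Star x (Star y z)) (Star x (Star z y))"
| "ax (Bul x y) (Bul y x)"
| "ax (Bul (Bul x y) z) (Bul x (Bul y z))"
| "ax (Star x (Bul y z)) (Star x (Star y z))"
| "ax (Star (Bul x y) z) (Bul x (Star y z))"

inductive tstep :: "tm \<Rightarrow> tm \<Rightarrow> bool" where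
  "ax s t \<Longrightarrow> tstep s t"
| "tstep s t \<Longrightarrow> tstep (Star s u) (Star t u)"
| "tstep s t \<Longrightarrow> tstep (Star u s) (Star u t)"
| "tstep s t \<Longrightarrow> tstep (Bul s u) (Bul t u)"
| "tstep s t \<Longrightarrow> tstep (Bul u s) (Bul u t)"

text \<open>Elements of the free operad (over k) are finitely supported functions tm => k;
  vec t is the basis vector of the term t.\<close>
definition vec :: "tm \<Rightarrow> tm \<Rightarrow> 'k::comm_ring_1" where
  "vec t = (\<lambda>s. if s = t then 1 else 0)"

text \<open>The operadic ideal generated by the relations: the k-span of all differences
  vec s - vec s' where s' arises from s by applying one relation inside a context.\<close>
inductive rel_ideal :: "(tm \<Rightarrow> 'k::comm_ring_1) \<Rightarrow> bool" where
  zero: "rel_ideal (\<lambda>_. 0)"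
| add: "rel_ideal r \<Longrightarrow> tstep s s' \<Longrightarrow> rel_ideal (\<lambda>u. r u + c * (vec s u - vec s' u))"

text \<open>ComTrias(n) = (free operad)(n) / ideal(n). Two elements are equal in ComTrias iff
  their difference lies in rel_ideal.\<close>
definition eqv :: "(tm \<Rightarrow> 'k::comm_ring_1) \<Rightarrow> (tm \<Rightarrow> 'k) \<Rightarrow> bool" where
  "eqv a b \<longleftrightarrow> rel_ideal (\<lambda>u. a u - b u)"

definition subsets_ne :: "nat \<Rightarrow> nat set set" where
  "subsets_ne n = {J. J \<subseteq> {1..n} \<and> J \<noteq> {}}"

end

theory Submission
  imports Defs "HOL-Library.Multiset"
begin


inductive E :: "tm \<Rightarrow> tm \<Rightarrow> bool" where
  Erefl: "E t t"
| Estep: "E s t \<Longrightarrow> tstep t u \<Longrightarrow> E s u"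
| Eback: "E s t \<Longrightarrow> tstep u t \<Longrightarrow> E s u"

lemma E_trans: "E t u \<Longrightarrow> E s t \<Longrightarrow> E s u"
  by (induction rule: E.induct) (auto intro: E.intros)

lemma E_sym: "E s t \<Longrightarrow> E t s"
proof (induction rule: E.induct)
  case (Erefl t) then show ?case by (rule E.Erefl)
next
  case (Estep s t u)
  have "E u t" by (rule Eback[OF Erefl Estep(2)])
  then show ?case using Estep(3) E_trans by blast
next
  case (Eback s t u)
  have "E u t" by (rule Estep[OF Erefl Eback(2)])
  then show ?case using Eback(3) E_trans by blast
qed

lemma E_ax: "ax s t \<Longrightarrow> E s t"
  by (rule Estep[OF Erefl]) (rule tstep.intros(1))

lemma E_ctx:
  assumes "E s t"
  shows "E (Star s u) (Star t u)" "E (Star u s) (Star u t)" "E (Bul s u) (Bul t u)" "E (Bul u s) (Bul u t)"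
  using assms by (induction rule: E.induct) (auto intro: E.intros tstep.intros)

lemma E_Star: "E s s' \<Longrightarrow> E t t' \<Longrightarrow> E (Star s t) (Star s' t')"
  by (meson E_ctx E_trans)

lemma E_Bul: "E s s' \<Longrightarrow> E t t' \<Longrightarrow> E (Bul s t) (Bul s' t')"
  by (meson E_ctx E_trans)

lemmas axE = ax.intros[THEN E_ax]
lemmas axE' = ax.intros[THEN E_ax, THEN E_sym]

fun BL :: "nat list \<Rightarrow> tm" where
  "BL [] = V 0"
| "BL [a] = V a"
| "BL (a # b # l) = Bul (V a) (BL (b # l))"

fun SC :: "tm \<Rightarrow> nat list \<Rightarrow> tm" where
  "SC x [] = x"
| "SC x (a # l) = SC (Star x (V a)) l"

fun vis :: "tm \<Rightarrow> nat list" where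
  "vis (V i) = [i]"
| "vis (Star s t) = vis s"
| "vis (Bul s t) = vis s @ vis t"

fun hid :: "tm \<Rightarrow> nat list" where
  "hid (V i) = []"
| "hid (Star s t) = hid s @ leaves t"
| "hid (Bul s t) = hid s @ hid t"

lemma BL_Cons: "l \<noteq> [] \<Longrightarrow> BL (a # l) = Bul (V a) (BL l)"
  by (cases l) auto

lemma SC_cong: "E x y \<Longrightarrow> E (SC x l) (SC y l)"
  by (induction l arbitrary: x y) (auto intro: E_Star E.Erefl)

lemma Bul_swap: "E (Bul a (Bul b c)) (Bul b (Bul a c))"
  by (meson E_trans E_Bul E.Erefl axE axE')

lemmas E_trans' = E_trans[rotated]
declare E_trans'[trans]

lemma sort_ne: "l \<noteq> [] \<Longrightarrow> sort l \<noteq> []"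
  by (metis length_0_conv length_sort)

lemma BL_insort: "l \<noteq> [] \<Longrightarrow> E (Bul (V a) (BL l)) (BL (insort a l))"
proof (induction l)
  case Nil then show ?case by simp
next
  case (Cons y ys)
  show ?case
  proof (cases "a \<le> y")
    case True then show ?thesis using Cons by (simp add: BL_Cons E.Erefl)
  next
    case False
    show ?thesis
    proof (cases ys)
      case Nil then show ?thesis using False by (simp add: axE)
    next
      case (Cons z zs)
      then have ne: "ys \<noteq> []" "insort a ys \<noteq> []" by auto
      have "E (Bul (V a) (BL (y # ys))) (Bul (V y) (Bul (V a) (BL ys)))"
        using ne by (simp add: BL_Cons Bul_swap)
      also have "E \<dots> (Bul (V y) (BL (insort a ys)))"
        using Cons.IH ne by (auto intro: E_Bul E.Erefl)
      finally show ?thesis using False ne by (simp add: BL_Cons)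
    qed
  qed
qed


lemma BL_sort: "l \<noteq> [] \<Longrightarrow> E (BL l) (BL (sort l))"
proof (induction l)
  case Nil then show ?case by simp
next
  case (Cons a l)
  show ?case
  proof (cases "l = []")
    case True then show ?thesis by (simp add: E.Erefl)
  next
    case False
    have "E (BL (a # l)) (Bul (V a) (BL (sort l)))"
      using False Cons.IH by (simp add: BL_Cons E_Bul E.Erefl)
    also have "E \<dots> (BL (insort a (sort l)))"
      using False by (intro BL_insort sort_ne)
    finally show ?thesis by simp
  qed
qed

lemma sort_mset_eq: "mset l = mset l' \<Longrightarrow> sort l = sort (l' :: nat list)"
  by (metis properties_for_sort mset_sort sorted_sort)

lemma BL_append: "p \<noteq> [] \<Longrightarrow> q \<noteq> [] \<Longrightarrow> E (Bul (BL p) (BL q)) (BL (p @ q))"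
proof (induction p rule: BL.induct)
  case 1 then show ?case by simp
next
  case (2 a) then show ?case by (simp add: BL_Cons E.Erefl)
next
  case (3 a b l)
  have "E (Bul (BL (a # b # l)) (BL q)) (Bul (V a) (Bul (BL (b # l)) (BL q)))"
    by (simp add: axE)
  also have "E \<dots> (Bul (V a) (BL (b # l @ q)))"
    using 3 by (auto intro: E_Bul E.Erefl)
  finally show ?case by simp
qed

lemma SC_append[simp]: "SC x (p @ q) = SC (SC x p) q"
  by (induction p arbitrary: x) auto

lemma SC_insort: "E (SC x (a # l)) (SC x (insort a l))"
proof (induction l arbitrary: x)
  case Nil then show ?case by (simp add: E.Erefl)
next
  case (Cons y l)
  show ?case
  proof (cases "a \<le> y")
    case True then show ?thesis by (simp add: E.Erefl)
  next
    case False
    have "E (Star (Star x (V a)) (V y)) (Star (Star x (V y)) (V a))"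
      by (meson E_trans' E_sym axE)
    then have "E (SC x (a # y # l)) (SC (Star x (V y)) (a # l))"
      by (simp add: SC_cong)
    also have "E \<dots> (SC (Star x (V y)) (insort a l))" by (rule Cons.IH)
    finally show ?thesis using False by simp
  qed
qed

lemma SC_sort: "E (SC x l) (SC x (sort l))"
proof (induction l arbitrary: x)
  case Nil then show ?case by (simp add: E.Erefl)
next
  case (Cons a l)
  have "E (SC x (a # l)) (SC x (a # sort l))" using Cons.IH by simp
  also have "E \<dots> (SC x (insort a (sort l)))" by (rule SC_insort)
  finally show ?case by simp
qed

lemma SC_mset: "mset l = mset l' \<Longrightarrow> E (SC x l) (SC x l')"
  by (metis SC_sort E_sym E_trans sort_mset_eq)

lemma BL_mset: "mset l = mset l' \<Longrightarrow> l \<noteq> [] \<Longrightarrow> E (BL l) (BL l')"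
  by (metis BL_sort E_sym E_trans sort_mset_eq mset_zero_iff)

lemma Star_flat: "E (Star x R) (SC x (leaves R))"
proof (induction R arbitrary: x)
  case (V i) then show ?case by (simp add: E.Erefl)
next
  case (Star p q)
  have "E (Star x (Star p q)) (Star (Star x p) q)" by (simp add: axE')
  also have "E \<dots> (SC (Star x p) (leaves q))" by (rule Star.IH(2))
  also have "E \<dots> (SC (SC x (leaves p)) (leaves q))" by (rule SC_cong[OF Star.IH(1)])
  finally show ?case by simp
next
  case (Bul p q)
  have "E (Star x (Bul p q)) (Star x (Star p q))" by (simp add: axE)
  also have "E \<dots> (Star (Star x p) q)" by (simp add: axE')
  also have "E \<dots> (SC (Star x p) (leaves q))" by (rule Bul.IH(2))
  also have "E \<dots> (SC (SC x (leaves p)) (leaves q))" by (rule SC_cong[OF Bul.IH(1)])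
  finally show ?case by simp
qed

lemma Bul_SC: "E (Bul x (SC y l)) (SC (Bul x y) l)"
proof (induction l arbitrary: y)
  case Nil then show ?case by (simp add: E.Erefl)
next
  case (Cons a l)
  have "E (Bul x (SC y (a # l))) (SC (Bul x (Star y (V a))) l)" using Cons.IH by simp
  also have "E \<dots> (SC (Star (Bul x y) (V a)) l)" by (rule SC_cong) (simp add: axE')
  finally show ?case by simp
qed

lemma vis_ne: "vis t \<noteq> []"
  by (induction t) auto

lemma NF: "E t (SC (BL (sort (vis t))) (sort (hid t)))"
proof (induction t)
  case (V i) then show ?case by (simp add: E.Erefl)
next
  case (Star s u)
  let ?X = "BL (sort (vis s))"
  have "E (Star s u) (Star (SC ?X (sort (hid s))) u)" using Star.IH by (simp add: E_Star E.Erefl)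
  also have "E \<dots> (SC (SC ?X (sort (hid s))) (leaves u))" by (rule Star_flat)
  also have "E \<dots> (SC ?X (sort (hid s @ leaves u)))"
    by (simp add: SC_mset del: SC_append flip: SC_append)
  finally show ?case by simp
next
  case (Bul s u)
  let ?X = "BL (sort (vis s))" and ?Y = "BL (sort (vis u))"
  let ?h1 = "sort (hid s)" and ?h2 = "sort (hid u)"
  have "E (Bul s u) (Bul (SC ?X ?h1) (SC ?Y ?h2))" using Bul.IH by (simp add: E_Bul)
  also have "E \<dots> (SC (Bul (SC ?X ?h1) ?Y) ?h2)" by (rule Bul_SC)
  also have "E \<dots> (SC (Bul ?Y (SC ?X ?h1)) ?h2)" by (rule SC_cong) (simp add: axE)
  also have "E \<dots> (SC (SC (Bul ?Y ?X) ?h1) ?h2)" by (rule SC_cong) (rule Bul_SC)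
  also have "E \<dots> (SC (Bul ?Y ?X) (sort (hid s @ hid u)))"
    by (simp add: SC_mset del: SC_append flip: SC_append)
  also have "E \<dots> (SC (BL (sort (vis u) @ sort (vis s))) (sort (hid s @ hid u)))"
    by (rule SC_cong, rule BL_append) (auto simp: vis_ne sort_ne)
  also have "E \<dots> (SC (BL (sort (vis s @ vis u))) (sort (hid s @ hid u)))"
    by (rule SC_cong, rule BL_mset) (auto simp: vis_ne sort_ne)
  finally show ?case by simp
qed



definition eN :: "nat \<Rightarrow> nat set \<Rightarrow> tm" where
  "eN n J = SC (BL (sorted_list_of_set J)) (sorted_list_of_set ({1..n} - J))"

lemma vis_SC[simp]: "vis (SC x l) = vis x"
  by (induction l arbitrary: x) auto
lemma leaves_SC[simp]: "leaves (SC x l) = leaves x @ l"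
  by (induction l arbitrary: x) auto
lemma vis_BL: "l \<noteq> [] \<Longrightarrow> vis (BL l) = l"
  by (induction l rule: BL.induct) auto
lemma leaves_BL: "l \<noteq> [] \<Longrightarrow> leaves (BL l) = l"
  by (induction l rule: BL.induct) auto
lemma mset_leaves: "mset (leaves t) = mset (vis t) + mset (hid t)"
  by (induction t) auto

lemma multilin_NF:
  assumes "multilin n t"
  shows "E t (eN n (set (vis t)))"
proof -
  have d: "distinct (vis t @ hid t)"
    using assms mset_leaves[of t] mset_eq_imp_distinct_iff[of "leaves t" "vis t @ hid t"]
    by (simp add: multilin_def)
  have s: "set (vis t) \<union> set (hid t) = {1..n}"
    using assms mset_leaves[of t] by (metis mset_append mset_eq_setD multilin_def set_append)
  have h: "set (hid t) = {1..n} - set (vis t)" using d s by auto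
  have 1: "sort (vis t) = sorted_list_of_set (set (vis t))"
    using d by (simp add: sorted_list_of_set_sort_remdups distinct_remdups_id)
  have 2: "sort (hid t) = sorted_list_of_set ({1..n} - set (vis t))"
    using d h by (metis sorted_list_of_set_sort_remdups distinct_remdups_id distinct_append)
  show ?thesis using NF[of t] 1 2 by (simp add: eN_def)
qed

lemma E_eqv: "E s t \<Longrightarrow> eqv (vec s :: tm \<Rightarrow> 'k::comm_ring_1) (vec t)"
  unfolding eqv_def
proof (induction rule: E.induct)
  case (Erefl t) then show ?case using rel_ideal.zero by simp
next
  case (Estep s t u)
  from rel_ideal.add[OF Estep(3) Estep(2), of 1]
  show ?case by (simp add: algebra_simps)
next
  case (Eback s t u)
  from rel_ideal.add[OF Eback(3) Eback(2), of "-1"]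
  show ?case by (simp add: algebra_simps)
qed

lemma tstep_vis: "tstep s t \<Longrightarrow> set (vis s) = set (vis t)"
proof (induction rule: tstep.induct)
  case (1 s t) then show ?case by (cases rule: ax.cases) auto
qed auto

lemma ideal_functional:
  assumes "rel_ideal r"
  shows "finite S \<Longrightarrow> (\<forall>t. t \<notin> S \<longrightarrow> r t = 0) \<Longrightarrow> (\<Sum>t\<in>{t\<in>S. set (vis t) = A}. r t) = (0::'k::comm_ring_1)"
  using assms
proof (induction arbitrary: S rule: rel_ideal.induct)
  case zero then show ?case by simp
next
  case (add r s s' c)
  let ?S = "insert s (insert s' S)"
  let ?F = "\<lambda>X. {t\<in>X. set (vis t) = A}"
  have fin: "finite ?S" using add by simp
  have z: "\<forall>t. t \<notin> ?S \<longrightarrow> r t = 0"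
  proof (intro allI impI)
    fix t assume "t \<notin> ?S"
    then have "r t + c * (vec s t - vec s' t) = 0" "vec s t = (0::'k)" "vec s' t = (0::'k)"
      using add.prems by (auto simp: vec_def)
    then show "r t = 0" by simp
  qed
  have ih: "(\<Sum>t\<in>?F ?S. r t) = 0" using add.IH[OF fin z] .
  have vs: "(\<Sum>t\<in>?F ?S. vec s t :: 'k) = (if set (vis s) = A then 1 else 0)"
  proof -
    have "(\<Sum>t\<in>?F ?S. vec s t :: 'k) = (\<Sum>t\<in>?F ?S. if t = s then 1 else 0)"
      by (simp add: vec_def)
    also have "\<dots> = (if s \<in> ?F ?S then 1 else 0)"
      using fin by (simp add: sum.delta')
    finally show ?thesis by simp
  qed
  have vs': "(\<Sum>t\<in>?F ?S. vec s' t :: 'k) = (if set (vis s') = A then 1 else 0)"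
  proof -
    have "(\<Sum>t\<in>?F ?S. vec s' t :: 'k) = (\<Sum>t\<in>?F ?S. if t = s' then 1 else 0)"
      by (simp add: vec_def)
    also have "\<dots> = (if s' \<in> ?F ?S then 1 else 0)"
      using fin by (simp add: sum.delta')
    finally show ?thesis by simp
  qed
  have "(\<Sum>t\<in>?F ?S. r t + c * (vec s t - vec s' t)) = 0"
    using ih vs vs' tstep_vis[OF add.hyps(2)]
    by (simp add: sum.distrib sum_distrib_left[symmetric] sum_subtractf)
  moreover have "(\<Sum>t\<in>?F S. r t + c * (vec s t - vec s' t)) = (\<Sum>t\<in>?F ?S. r t + c * (vec s t - vec s' t))"
    by (rule sum.mono_neutral_left) (use fin add.prems in auto)
  ultimately show ?case by simp
qed

lemma eN_props:
  assumes "J \<in> subsets_ne n"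
  shows "vis (eN n J) = sorted_list_of_set J" "set (vis (eN n J)) = J" "multilin n (eN n J)"
proof -
  have f: "finite J" "J \<noteq> {}" "J \<subseteq> {1..n}" using assms by (auto simp: subsets_ne_def finite_subset)
  then have ne: "sorted_list_of_set J \<noteq> []" by simp
  show 1: "vis (eN n J) = sorted_list_of_set J" using ne by (simp add: eN_def vis_BL)
  show "set (vis (eN n J)) = J" using 1 f by simp
  show "multilin n (eN n J)" using ne f by (auto simp: eN_def leaves_BL multilin_def)
qed

lemma leaves_relabel[simp]: "leaves (relabel f t) = map f (leaves t)"
  by (induction t) auto
lemma vis_relabel[simp]: "vis (relabel f t) = map f (vis t)"
  by (induction t) auto
lemma leaves_subst[simp]: "leaves (subst F t) = concat (map (\<lambda>j. leaves (F j)) (leaves t))"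
  by (induction t) auto
lemma vis_subst[simp]: "vis (subst F t) = concat (map (\<lambda>j. vis (F j)) (vis t))"
  by (induction t) auto

lemma distinct_concat_map:
  "distinct xs \<Longrightarrow> (\<forall>j\<in>set xs. distinct (f j)) \<Longrightarrow>
   (\<forall>j\<in>set xs. \<forall>j'\<in>set xs. j \<noteq> j' \<longrightarrow> set (f j) \<inter> set (f j') = {}) \<Longrightarrow>
   distinct (concat (map f xs))"
  by (induction xs) auto

lemma blocks_union:
  "(\<Union>j\<in>{1..m}. (\<lambda>a. (\<Sum>l\<in>{1..<j}. ar l) + a) ` {1..(ar::nat\<Rightarrow>nat) j}) = {1..(\<Sum>l\<in>{1..<Suc m}. ar l)}"
proof (induction m)
  case 0 then show ?case by auto
next
  case (Suc m)
  have "{1..Suc m} = insert (Suc m) {1..m}" by auto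
  then have "(\<Union>j\<in>{1..Suc m}. (\<lambda>a. (\<Sum>l\<in>{1..<j}. ar l) + a) ` {1..ar j})
     = {1..(\<Sum>l\<in>{1..<Suc m}. ar l)} \<union> (\<lambda>a. (\<Sum>l\<in>{1..<Suc m}. ar l) + a) ` {1..ar (Suc m)}"
    using Suc by auto
  also have "\<dots> = {1..(\<Sum>l\<in>{1..<Suc (Suc m)}. ar l)}"
    by (auto simp: image_iff)
  finally show ?case .
qed

lemma blocks_disj:
  assumes "j < j'"
  shows "(\<Sum>l\<in>{1..<j}. ar l) + ar j \<le> (\<Sum>l\<in>{1..<j'}. (ar::nat\<Rightarrow>nat) l) \<or> j = 0"
proof (cases "j = 0")
  case False
  then have "(\<Sum>l\<in>{1..<j}. ar l) + ar j = (\<Sum>l\<in>{1..<Suc j}. ar l)" by simp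
  also have "\<dots> \<le> (\<Sum>l\<in>{1..<j'}. ar l)" using assms by (intro sum_mono2) auto
  finally show ?thesis by simp
qed simp



lemma comp_multilin:
  fixes ar :: "nat \<Rightarrow> nat"
  assumes J: "J \<in> subsets_ne m"
    and h: "\<forall>j\<in>{1..m}. ar j \<ge> 1 \<and> Js j \<in> subsets_ne (ar j)"
  defines "t \<equiv> subst (\<lambda>j. relabel (\<lambda>a. (\<Sum>l\<in>{1..<j}. ar l) + a) (eN (ar j) (Js j))) (eN m J)"
  shows "multilin (\<Sum>l\<in>{1..m}. ar l) t"
    "set (vis t) = (\<Union>j\<in>J. (\<lambda>a. (\<Sum>l\<in>{1..<j}. ar l) + a) ` Js j)"
proof -
  let ?P = "\<lambda>j. (\<Sum>l\<in>{1..<j}. ar l)"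
  let ?f = "\<lambda>j. map (\<lambda>a. ?P j + a) (leaves (eN (ar j) (Js j)))"
  have mJ: "multilin m (eN m J)" using eN_props[OF J] by simp
  have mj: "multilin (ar j) (eN (ar j) (Js j))" if "j \<in> {1..m}" for j
    using eN_props h that by blast
  have lt: "leaves t = concat (map ?f (leaves (eN m J)))" by (simp add: t_def)
  have sf: "set (?f j) = (\<lambda>a. ?P j + a) ` {1..ar j}" if "j \<in> {1..m}" for j
    using mj[OF that] by (simp add: multilin_def)
  have "distinct (concat (map ?f (leaves (eN m J))))"
  proof (rule distinct_concat_map)
    show "distinct (leaves (eN m J))" using mJ by (simp add: multilin_def)
    show "\<forall>j\<in>set (leaves (eN m J)). distinct (?f j)"
      using mj mJ by (auto simp: multilin_def distinct_map inj_on_def)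
    show "\<forall>j\<in>set (leaves (eN m J)). \<forall>j'\<in>set (leaves (eN m J)). j \<noteq> j' \<longrightarrow> set (?f j) \<inter> set (?f j') = {}"
    proof (intro ballI impI)
      fix j j' assume a: "j \<in> set (leaves (eN m J))" "j' \<in> set (leaves (eN m J))" "j \<noteq> j'"
      then have jm: "j \<in> {1..m}" "j' \<in> {1..m}" using mJ by (auto simp: multilin_def)
      have key: "set (?f i) \<inter> set (?f i') = {}" if "i < i'" "i \<in> {1..m}" "i' \<in> {1..m}" for i i'
      proof -
        have "?P i + ar i \<le> ?P i'" using blocks_disj[OF that(1), of ar] that by auto
        then show ?thesis using sf that(2,3) by auto
      qed
      show "set (?f j) \<inter> set (?f j') = {}"
      proof (cases "j < j'")
        case True then show ?thesis using key jm by blast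
      next
        case False then have "j' < j" using a(3) by simp
        then show ?thesis using key jm by blast
      qed
    qed
  qed
  moreover have "set (leaves t) = {1..(\<Sum>l\<in>{1..m}. ar l)}"
  proof -
    have "set (leaves t) = (\<Union>j\<in>{1..m}. set (?f j))"
      using lt mJ by (simp add: multilin_def)
    also have "\<dots> = (\<Union>j\<in>{1..m}. (\<lambda>a. ?P j + a) ` {1..ar j})" using sf by simp
    also have "\<dots> = {1..(\<Sum>l\<in>{1..<Suc m}. ar l)}" by (rule blocks_union)
    finally show ?thesis by (simp add: atLeastLessThanSuc_atLeastAtMost)
  qed
  ultimately show "multilin (\<Sum>l\<in>{1..m}. ar l) t" using lt by (simp add: multilin_def)
  have JS: "J \<subseteq> {1..m}" using J by (simp add: subsets_ne_def)
  show "set (vis t) = (\<Union>j\<in>J. (\<lambda>a. ?P j + a) ` Js j)"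
  proof -
    have "\<forall>j\<in>J. set (vis (eN (ar j) (Js j))) = Js j" using eN_props(2) h JS by blast
    then show ?thesis using eN_props(2)[OF J] by (simp add: t_def image_image)
  qed
qed

lemma set_leaves: "set (leaves t) = set (vis t) \<union> set (hid t)"
  by (induction t) auto

lemma finS_lemma: "finite (subsets_ne n)" unfolding subsets_ne_def
  by (rule finite_subset[of _ "Pow {1..n}"]) auto

theorem mainTheorem6:
  "\<exists>e :: nat \<Rightarrow> nat set \<Rightarrow> tm.
     \<comment> \<open>e n J is a multilinear representative of the element e^n_J of ComTrias(n)\<close>
     (\<forall>n\<ge>1. \<forall>J\<in>subsets_ne n. multilin n (e n J))
   \<comment> \<open>spanning: the classes of e n J span ComTrias(n)\<close>
   \<and> (\<forall>n\<ge>1. \<forall>t. multilin n t \<longrightarrow>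
        (\<exists>c :: nat set \<Rightarrow> 'k::comm_ring_1.
           eqv (vec t) (\<lambda>u. \<Sum>J\<in>subsets_ne n. c J * vec (e n J) u)))
   \<comment> \<open>linear independence in ComTrias(n)\<close>
   \<and> (\<forall>n\<ge>1. \<forall>c :: nat set \<Rightarrow> 'k.
        eqv (\<lambda>u. \<Sum>J\<in>subsets_ne n. c J * vec (e n J) u) (\<lambda>_. 0) \<longrightarrow>
        (\<forall>J\<in>subsets_ne n. c J = 0))
   \<comment> \<open>S_n-equivariance: the action is induced by the natural action on subsets\<close>
   \<and> (\<forall>n\<ge>1. \<forall>\<sigma>. \<sigma> permutes {1..n} \<longrightarrow> (\<forall>J\<in>subsets_ne n.
        eqv (vec (relabel \<sigma> (e n J)) :: tm \<Rightarrow> 'k) (vec (e n (\<sigma> ` J)))))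
   \<comment> \<open>operadic composition\<close>
   \<and> (\<forall>m\<ge>1. \<forall>J\<in>subsets_ne m. \<forall>ar :: nat \<Rightarrow> nat. \<forall>Js :: nat \<Rightarrow> nat set.
        (\<forall>j\<in>{1..m}. ar j \<ge> 1 \<and> Js j \<in> subsets_ne (ar j)) \<longrightarrow>
        eqv (vec (subst (\<lambda>j. relabel (\<lambda>a. (\<Sum>l\<in>{1..<j}. ar l) + a) (e (ar j) (Js j))) (e m J))
               :: tm \<Rightarrow> 'k)
            (vec (e (\<Sum>l\<in>{1..m}. ar l)
                    (\<Union>j\<in>J. (\<lambda>a. (\<Sum>l\<in>{1..<j}. ar l) + a) ` Js j))))"
proof (rule exI[of _ eN], intro conjI allI impI ballI)
  fix n J assume "J \<in> subsets_ne n" then show "multilin n (eN n J)" by (rule eN_props)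
next
  fix n t assume mt: "multilin n t"
  let ?J = "set (vis t)"
  have Jin: "?J \<in> subsets_ne n"
    using mt vis_ne[of t] by (auto simp: subsets_ne_def multilin_def set_leaves)
  have "(\<lambda>u. \<Sum>J\<in>subsets_ne n. (if J = ?J then 1 else 0) * vec (eN n J) u) = (vec (eN n ?J) :: tm \<Rightarrow> 'k)"
    using Jin finS_lemma by (simp add: if_distrib[of "\<lambda>x. x * _"] sum.delta' cong: if_cong)
  then show "\<exists>c :: nat set \<Rightarrow> 'k. eqv (vec t) (\<lambda>u. \<Sum>J\<in>subsets_ne n. c J * vec (eN n J) u)"
    using E_eqv[OF multilin_NF[OF mt]] by metis
next
  fix n and c :: "nat set \<Rightarrow> 'k" and J0
  assume "eqv (\<lambda>u. \<Sum>J\<in>subsets_ne n. c J * vec (eN n J) u) (\<lambda>_. 0)" and J0: "J0 \<in> subsets_ne n"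
  then have ri: "rel_ideal (\<lambda>u. \<Sum>J\<in>subsets_ne n. c J * vec (eN n J) u)" by (simp add: eqv_def)
  let ?S = "eN n ` subsets_ne n"
  have finS: "finite (subsets_ne n)" unfolding subsets_ne_def
    by (rule finite_subset[of _ "Pow {1..n}"]) auto
  have zero: "\<forall>t. t \<notin> ?S \<longrightarrow> (\<Sum>J\<in>subsets_ne n. c J * vec (eN n J) t) = 0"
    by (auto simp: vec_def intro!: sum.neutral)
  have eq: "{t \<in> ?S. set (vis t) = J0} = {eN n J0}"
    using J0 eN_props(2) by auto
  have inj: "eN n J0 = eN n J \<longleftrightarrow> J = J0" if "J \<in> subsets_ne n" for J
    using eN_props(2)[OF that] eN_props(2)[OF J0] by metis
  have "(\<Sum>t\<in>{t \<in> ?S. set (vis t) = J0}. \<Sum>J\<in>subsets_ne n. c J * vec (eN n J) t) = 0"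
    using ideal_functional[OF ri] finS zero by blast
  then have "(\<Sum>J\<in>subsets_ne n. c J * (if eN n J0 = eN n J then 1 else 0)) = 0"
    unfolding eq by (simp add: vec_def)
  moreover have "(\<Sum>J\<in>subsets_ne n. c J * (if eN n J0 = eN n J then 1 else 0))
     = (\<Sum>J\<in>subsets_ne n. c J * (if J = J0 then 1 else 0))"
    by (rule sum.cong) (simp_all add: inj)
  ultimately have "(\<Sum>J\<in>subsets_ne n. c J * (if J = J0 then 1 else 0)) = 0" by simp
  then show "c J0 = 0" using J0 finS by (simp add: sum.delta' if_distrib[of "\<lambda>x. _ * x"] cong: if_cong)
next
  fix n \<sigma> J assume p: "\<sigma> permutes {1..n}" and J: "J \<in> subsets_ne n"
  have m: "multilin n (relabel \<sigma> (eN n J))"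
    using eN_props(3)[OF J] p permutes_inj[OF p] permutes_image[OF p]
    by (auto simp: multilin_def distinct_map inj_on_subset[of _ UNIV])
  have "set (vis (relabel \<sigma> (eN n J))) = \<sigma> ` J" using eN_props(2)[OF J] by simp
  then show "eqv (vec (relabel \<sigma> (eN n J)) :: tm \<Rightarrow> 'k) (vec (eN n (\<sigma> ` J)))"
    using E_eqv[OF multilin_NF[OF m]] by simp
next
  fix m J and ar :: "nat \<Rightarrow> nat" and Js
  assume J: "J \<in> subsets_ne m" and h: "\<forall>j\<in>{1..m}. 1 \<le> ar j \<and> Js j \<in> subsets_ne (ar j)"
  note c = comp_multilin[OF J h]
  show "eqv (vec (subst (\<lambda>j. relabel (\<lambda>a. (\<Sum>l\<in>{1..<j}. ar l) + a) (eN (ar j) (Js j))) (eN m J))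
               :: tm \<Rightarrow> 'k)
            (vec (eN (\<Sum>l\<in>{1..m}. ar l)
                    (\<Union>j\<in>J. (\<lambda>a. (\<Sum>l\<in>{1..<j}. ar l) + a) ` Js j)))"
    using E_eqv[OF multilin_NF[OF c(1)]] c(2) by simp
qed

end
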